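(* Let $\tau\in(0,1)$, $(\beta,\gamma,\kappa,\upsilon,C_S,C_{\mathrm{App}})\in(0,1]\times(0,\infty)^2\times(0,1)\times[1,\infty)^2$. Let $P\in\mathcal P_{\mathrm{H\ddot ol}}(\beta,C_S)\cap\mathcal P_{\mathrm{App}}(\mathcal A_{\mathrm{rect}},\tau,\kappa,\gamma,C_{\mathrm{App}})$ be a distribution on $\mathbb R^d\times[0,1]$ with regression function $\eta$ and Lebesgue absolutely continuous marginal $\mu$ having a continuous density $f_\mu$. Suppose $\mathcal X_\tau(\eta)\subseteq\mathcal R_\upsilon(\mu)$, $\mu(\eta^{-1}((\tau,1]))>0$ and $\eta^{-1}(\{\tau\})\neq\emptyset$. Then $\beta\gamma(\kappa-1)\le d\kappa$.
   Context: $\eta(x)=\mathbb E(Y\mid X=x)$; $\mathcal X_c(f):=\{x:f(x)\ge c\}$; $\bar B_\infty,B_\infty$: closed/open sup-norm balls. $\mathcal P_{\mathrm{H\ddot ol}}(\beta,C_S)$ (for $\beta\in(0,1]$): $|\eta(x')-\eta(x)|\le C_S\|x'-x\|^\beta_\infty$ for all $x,x'$. $M_\tau:=\sup\{\mu(A):A\in\mathcal A_{\mathrm{rect}},A\subseteq\mathcal X_\tau(\eta)\}$, with $\mathcal A_{\mathrm{rect}}$ the compact axis-aligned hyper-rectangles. Lower density $\omega(x):=\inf_{r\in(0,1)}\mu(\bar B_\infty(x,r))/r^d$. $\mathcal P_{\mathrm{App}}(\mathcal A_{\mathrm{rect}},\tau,\kappa,\gamma,C_{\mathrm{App}})$: $\sup\{\mu(A):A\in\mathcal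 A_{\mathrm{rect}},A\subseteq\mathcal X_\xi(\omega)\cap\mathcal X_{\tau+\Delta}(\eta)\}\ge M_\tau-C_{\mathrm{App}}(\xi^\kappa+\Delta^\gamma)$ for all $\xi,\Delta>0$. $\mathcal R_\upsilon(\mu):=\bigcap_{r\in(0,1)}\{x:\mu(B_\infty(x,r))\ge\upsilon r^d\sup_{x'\in B_\infty(x,(1+\upsilon)r)}f_\mu(x')\}$. *)

theory Defs
  imports "HOL-Analysis.Analysis" "HOL-Probability.Probability"
begin

definition linf_dist :: "real^'d \<Rightarrow> real^'d \<Rightarrow> real" where
  "linf_dist x y = Max (range (\<lambda>i. \<bar>x$i - y$i\<bar>))"

definition cball_inf :: "real^'d \<Rightarrow> real \<Rightarrow> (real^'d) set" where
  "cball_inf x r = {y. linf_dist x y \<le> r}"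

definition ball_inf :: "real^'d \<Rightarrow> real \<Rightarrow> (real^'d) set" where
  "ball_inf x r = {y. linf_dist x y < r}"

definition superlevel :: "('a \<Rightarrow> real) \<Rightarrow> real \<Rightarrow> 'a set" where
  "superlevel f c = {x. c \<le> f x}"

definition A_rect :: "(real^'d) set set" where
  "A_rect = {cbox a b | a b. \<forall>i. a$i \<le> b$i}"

text \<open>Largest measure of a rectangle inside a set (sup of empty family = 0).\<close>
definition rect_sup :: "(real^'d) measure \<Rightarrow> (real^'d) set \<Rightarrow> ennreal" where
  "rect_sup \<mu> S = Sup {emeasure \<mu> A | A. A \<in> A_rect \<and> A \<subseteq> S}"

definition M_tau :: "(real^'d) measure \<Rightarrow> (real^'d \<Rightarrow> real) \<Rightarrow> real \<Rightarrow> ennreal" where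
  "M_tau \<mu> \<eta> \<tau> = rect_sup \<mu> (superlevel \<eta> \<tau>)"

definition lower_density :: "(real^'d) measure \<Rightarrow> real^'d \<Rightarrow> real" where
  "lower_density \<mu> x = (INF r\<in>{0<..<1}. measure \<mu> (cball_inf x r) / r ^ CARD('d))"

definition Hoelder_class :: "real \<Rightarrow> real \<Rightarrow> (real^'d \<Rightarrow> real) \<Rightarrow> bool" where
  "Hoelder_class \<beta> C_S \<eta> \<longleftrightarrow>
     (\<forall>x x'. \<bar>\<eta> x' - \<eta> x\<bar> \<le> C_S * linf_dist x' x powr \<beta>)"

definition App_class ::
  "(real^'d) measure \<Rightarrow> (real^'d \<Rightarrow> real) \<Rightarrow> real \<Rightarrow> real \<Rightarrow> real \<Rightarrow> real \<Rightarrow> bool" where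
  "App_class \<mu> \<eta> \<tau> \<kappa> \<gamma> C_App \<longleftrightarrow>
     (\<forall>\<xi>>0. \<forall>\<Delta>>0.
        rect_sup \<mu> (superlevel (lower_density \<mu>) \<xi> \<inter> superlevel \<eta> (\<tau> + \<Delta>))
          \<ge> M_tau \<mu> \<eta> \<tau> - ennreal (C_App * (\<xi> powr \<kappa> + \<Delta> powr \<gamma>)))"

text \<open>The set R_upsilon(mu), given the density f of mu.\<close>
definition R_set :: "real \<Rightarrow> (real^'d) measure \<Rightarrow> (real^'d \<Rightarrow> real) \<Rightarrow> (real^'d) set" where
  "R_set \<upsilon> \<mu> f = (\<Inter>r\<in>{0<..<1}.
      {x. measure \<mu> (ball_inf x r)
            \<ge> \<upsilon> * r ^ CARD('d) * (SUP x'\<in>ball_inf x ((1 + \<upsilon>) * r). f x')})"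

text \<open>eta is (a version of) the regression function E(Y | X = x) of P,
  with mu the X-marginal of P.\<close>
definition is_regression_function ::
  "((real^'d) \<times> real) measure \<Rightarrow> (real^'d \<Rightarrow> real) \<Rightarrow> bool" where
  "is_regression_function P \<eta> \<longleftrightarrow>
     \<eta> \<in> borel_measurable borel \<and> (\<forall>x. 0 \<le> \<eta> x \<and> \<eta> x \<le> 1) \<and>
     (\<forall>A\<in>sets borel.
        (\<integral>p. indicator (A \<times> UNIV) p * snd p \<partial>P)
          = (\<integral>x. indicator A x * \<eta> x \<partial>(distr P borel fst)))"

end

theory Submission imports Defs begin

lemma fin_rng: "finite (range (\<lambda>i::'d::finite. g i :: real))" by simp

lemma linf_le_iff: "linf_dist x y \<le> r \<longleftrightarrow> (\<forall>i. \<bar>x$i - y$i\<bar> \<le> r)"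
  unfolding linf_dist_def by (subst Max_le_iff) auto

lemma linf_less_iff: "linf_dist x y < r \<longleftrightarrow> (\<forall>i. \<bar>x$i - y$i\<bar> < r)"
  unfolding linf_dist_def by (subst Max_less_iff) auto

lemma linf_ge: "\<bar>x$i - y$i\<bar> \<le> linf_dist x y"
  unfolding linf_dist_def by (rule Max_ge) auto

lemma linf_nonneg: "0 \<le> linf_dist x y"
  using linf_ge[of x _ y] abs_ge_zero order_trans by blast

lemma ball_inf_eq: "ball_inf x r = box (\<chi> i. x$i - r) (\<chi> i. x$i + r)"
  unfolding ball_inf_def by (auto simp: linf_less_iff mem_box_cart abs_less_iff; smt (verit) )

lemma cball_inf_eq: "cball_inf x r = cbox (\<chi> i. x$i - r) (\<chi> i. x$i + r)"
  unfolding cball_inf_def by (auto simp: linf_le_iff mem_box_cart abs_le_iff; smt (verit) )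

lemma lborel_cball_inf:
  fixes x :: "real^'d"
  assumes "0 \<le> r"
  shows "measure lborel (cball_inf x r) = (2*r) ^ CARD('d)"
proof -
  have ne: "cbox (\<chi> i. x$i - r) (\<chi> i. x$i + r) \<noteq> {}"
    using assms by (auto simp: interval_eq_empty_cart)
  show ?thesis unfolding cball_inf_eq
    using content_cbox_cart[OF ne] by (simp add: prod_constant)
qed

lemma fst_meas: "fst \<in> measurable (borel :: ('a::second_countable_topology \<times> 'b::second_countable_topology) measure) borel"
  by (simp add: borel_measurable_continuous_onI continuous_on_fst)

lemma sup_bdd:
  fixes f :: "real^'d \<Rightarrow> real"
  assumes "continuous_on UNIV f"
  shows "bdd_above (f ` ball_inf c R)"
proof -
  have "compact (f ` cball_inf c R)" unfolding cball_inf_eq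
    by (rule compact_continuous_image[OF continuous_on_subset[OF assms]]) auto
  then have "bdd_above (f ` cball_inf c R)" by (auto intro: bounded_imp_bdd_above compact_imp_bounded)
  moreover have "ball_inf c R \<subseteq> cball_inf c R" unfolding ball_inf_def cball_inf_def by auto
  ultimately show ?thesis by (meson bdd_above_mono image_mono)
qed


lemma dens_bound:
  fixes f :: "real^'d \<Rightarrow> real" and a :: "real^'d"
  assumes cont: "continuous_on UNIV f" and nn: "\<forall>x. 0 \<le> f x"
    and mu: "\<mu> = density lborel (\<lambda>x. ennreal (f x))" and fin: "finite_measure \<mu>"
    and le: "\<forall>y\<in>cball_inf a \<rho>. f y \<le> S" and S0: "0 \<le> S" and r0: "0 \<le> \<rho>"
  shows "measure \<mu> (cball_inf a \<rho>) \<le> S * (2*\<rho>) ^ CARD('d)"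
proof -
  let ?T = "cball_inf a \<rho>"
  have Tb: "?T \<in> sets borel" unfolding cball_inf_eq by simp
  have fm: "(\<lambda>x. ennreal (f x)) \<in> borel_measurable lborel"
  proof -
    have "f \<in> borel_measurable borel" using cont by (simp add: borel_measurable_continuous_onI)
    then show ?thesis by simp
  qed
  have "emeasure \<mu> ?T = (\<integral>\<^sup>+ x. ennreal (f x) * indicator ?T x \<partial>lborel)"
    unfolding mu by (rule emeasure_density[OF fm]) (use Tb in simp)
  also have "\<dots> \<le> (\<integral>\<^sup>+ x. ennreal S * indicator ?T x \<partial>lborel)"
    by (rule nn_integral_mono) (use le in \<open>auto simp: indicator_def intro: ennreal_leI\<close>)
  also have "\<dots> = ennreal S * emeasure lborel ?T"
    by (rule nn_integral_cmult_indicator) (use Tb in simp)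
  also have "emeasure lborel ?T = ennreal (measure lborel ?T)"
    unfolding cball_inf_eq by (simp add: emeasure_eq_measure2 emeasure_lborel_cbox_finite)
  also have "measure lborel ?T = (2*\<rho>) ^ CARD('d)" by (rule lborel_cball_inf[OF r0])
  finally have "emeasure \<mu> ?T \<le> ennreal (S * (2*\<rho>) ^ CARD('d))"
    using S0 r0 by (simp add: ennreal_mult)
  moreover have "emeasure \<mu> ?T = ennreal (measure \<mu> ?T)"
    using fin by (simp add: finite_measure.emeasure_eq_measure)
  ultimately show ?thesis using S0 r0 by (simp add: ennreal_le_iff)
qed


theorem mainTheorem18:
  fixes P :: "((real^'d) \<times> real) measure"
    and \<eta> f\<mu> :: "real^'d \<Rightarrow> real"
    and \<tau> \<beta> \<gamma> \<kappa> \<upsilon> C_S C_App :: real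
  assumes "0 < \<tau>" "\<tau> < 1"
    and "0 < \<beta>" "\<beta> \<le> 1" "0 < \<gamma>" "0 < \<kappa>" "0 < \<upsilon>" "\<upsilon> < 1"
    and "1 \<le> C_S" "1 \<le> C_App"
    and "prob_space P" "sets P = sets borel"
    and "AE p in P. snd p \<in> {0..1}"
    and "is_regression_function P \<eta>"
    and "continuous_on UNIV f\<mu>" "\<forall>x. 0 \<le> f\<mu> x"
    and "distr P borel fst = density lborel (\<lambda>x. ennreal (f\<mu> x))"
    and "Hoelder_class \<beta> C_S \<eta>"
    and "App_class (distr P borel fst) \<eta> \<tau> \<kappa> \<gamma> C_App"
    and "superlevel \<eta> \<tau> \<subseteq> R_set \<upsilon> (distr P borel fst) f\<mu>"
    and "measure (distr P borel fst) (\<eta> -` {\<tau><..1}) > 0"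
    and "\<eta> -` {\<tau>} \<noteq> {}"
  shows "\<beta> * \<gamma> * (\<kappa> - 1) \<le> real CARD('d) * \<kappa>"
proof (cases "\<kappa> \<le> 1")
  case True
  show ?thesis
  proof -
    have "\<beta> * \<gamma> * (\<kappa> - 1) \<le> 0" using True assms(3,5) by (intro mult_nonneg_nonpos) auto
    moreover have "0 \<le> real CARD('d) * \<kappa>" using assms(6) by simp
    ultimately show ?thesis by linarith
  qed
next
  case False
  note tau0 = assms(1) and beta0 = assms(3) and gam0 = assms(5) and kap0 = assms(6)
    and ups0 = assms(7) and ups1 = assms(8) and CS1 = assms(9) and CA1 = assms(10)
    and Psp = assms(11) and Psets = assms(12) and reg = assms(14) and cont = assms(15)
    and fnn = assms(16) and mueq = assms(17) and hol = assms(18) and app = assms(19)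
    and Rsub = assms(20) and pos = assms(21)
  define \<mu> where "\<mu> = distr P borel fst"
  define d where "d = CARD('d)"
  have fstm: "fst \<in> measurable P borel"
    using fst_meas measurable_cong_sets[OF Psets refl] by blast
  have smu: "sets \<mu> = sets borel" "space \<mu> = UNIV" unfolding \<mu>_def by auto
  have "emeasure \<mu> (space \<mu>) = 1"
    unfolding \<mu>_def
    using emeasure_distr[OF fstm, of UNIV] prob_space.emeasure_space_1[OF Psp] by simp
  then have pmu: "prob_space \<mu>" by (rule prob_spaceI)
  then have fmu: "finite_measure \<mu>" by (simp add: prob_space.finite_measure)
  have mu2: "\<mu> = density lborel (\<lambda>x. ennreal (f\<mu> x))" using mueq \<mu>_def by simp
  have em: "emeasure \<mu> A = ennreal (measure \<mu> A)" for A
    using fmu by (simp add: finite_measure.emeasure_eq_measure)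
  have holx: "\<bar>\<eta> y - \<eta> x\<bar> \<le> C_S * linf_dist y x powr \<beta>" for x y
    using hol unfolding Hoelder_class_def by blast
  have KR: "measure \<mu> (ball_inf x r) \<ge> \<upsilon> * r ^ d * (SUP x'\<in>ball_inf x ((1 + \<upsilon>) * r). f\<mu> x')"
    if "\<eta> x \<ge> \<tau>" "0 < r" "r < 1" for x r
    using Rsub that unfolding superlevel_def R_set_def \<mu>_def d_def by auto
  have supup: "f\<mu> y \<le> (SUP x'\<in>ball_inf x R. f\<mu> x')" if "y \<in> ball_inf x R" for x y R
    by (rule cSUP_upper[OF that sup_bdd[OF cont]])
  define M where "M = M_tau \<mu> \<eta> \<tau>"
  have Mle1: "M \<le> 1"
    unfolding M_def M_tau_def rect_sup_def
  proof (rule Sup_least)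
    fix x assume "x \<in> {emeasure \<mu> A |A. A \<in> A_rect \<and> A \<subseteq> superlevel \<eta> \<tau>}"
    then obtain A where "x = emeasure \<mu> A" by blast
    moreover have "emeasure \<mu> A \<le> emeasure \<mu> (space \<mu>)" by (rule emeasure_space)
    ultimately show "x \<le> 1" using prob_space.emeasure_space_1[OF pmu] by simp
  qed
  have Mupper: "emeasure \<mu> A \<le> M" if "A \<in> A_rect" "A \<subseteq> superlevel \<eta> \<tau>" for A
    unfolding M_def M_tau_def rect_sup_def using that by (intro Sup_upper) blast
  obtain x0 where x0: "\<tau> < \<eta> x0" "f\<mu> x0 > 0"
  proof -
    have "\<exists>x. \<tau> < \<eta> x \<and> \<eta> x \<le> 1 \<and> f\<mu> x \<noteq> 0"
    proof (rule ccontr)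
      assume "\<not> ?thesis"
      then have z: "ennreal (f\<mu> x) * indicator (\<eta> -` {\<tau><..1}) x = 0" for x
        by (auto simp: indicator_def)
      have etam: "\<eta> \<in> borel_measurable borel" using reg unfolding is_regression_function_def by blast
      have U: "\<eta> -` {\<tau><..1} \<in> sets borel" using measurable_sets_borel[OF etam] by simp
      have fm: "(\<lambda>x. ennreal (f\<mu> x)) \<in> borel_measurable lborel"
      proof -
        have "f\<mu> \<in> borel_measurable borel" using cont by (simp add: borel_measurable_continuous_onI)
        then show ?thesis by simp
      qed
      have "emeasure \<mu> (\<eta> -` {\<tau><..1}) = 0"
      proof -
        have zz: "(\<lambda>x. ennreal (f\<mu> x) * indicator (\<eta> -` {\<tau><..1}) x) = (\<lambda>x. 0)"
          using z by (intro ext) blast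
        show ?thesis unfolding mu2 by (subst emeasure_density[OF fm]) (use U zz in simp_all)
      qed
      then have "measure \<mu> (\<eta> -` {\<tau><..1}) = 0" by (simp add: measure_def)
      then show False using pos \<mu>_def by simp
    qed
    then obtain x where x: "\<tau> < \<eta> x" "f\<mu> x \<noteq> 0" by blast
    moreover have "0 \<le> f\<mu> x" using fnn by blast
    ultimately show ?thesis using that[of x] by (simp add: less_le)
  qed
  define r0 where "r0 = min (1/2) (((\<eta> x0 - \<tau>) / (2 * C_S)) powr (1/\<beta>))"
  have r0p: "0 < r0" "r0 < 1" using x0 CS1 unfolding r0_def by auto
  have r0b: "C_S * r0 powr \<beta> < \<eta> x0 - \<tau>"
  proof -
    have "r0 powr \<beta> \<le> (((\<eta> x0 - \<tau>) / (2 * C_S)) powr (1/\<beta>)) powr \<beta>"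
      using r0p beta0 unfolding r0_def by (intro powr_mono2) auto
    also have "\<dots> = (\<eta> x0 - \<tau>) / (2 * C_S)" using beta0 x0 CS1 by (simp add: powr_powr)
    finally show ?thesis using CS1 x0 by (simp add: field_simps)
  qed
  have cb0: "cball_inf x0 r0 \<subseteq> superlevel \<eta> \<tau>"
  proof
    fix y assume "y \<in> cball_inf x0 r0"
    then have "linf_dist y x0 \<le> r0" unfolding cball_inf_def
      by (simp add: linf_le_iff abs_minus_commute)
    then have "linf_dist y x0 powr \<beta> \<le> r0 powr \<beta>" using beta0 linf_nonneg by (intro powr_mono2) auto
    then have "C_S * linf_dist y x0 powr \<beta> \<le> C_S * r0 powr \<beta>" using CS1 by simp
    then show "y \<in> superlevel \<eta> \<tau>" using holx[of y x0] r0b unfolding superlevel_def by (auto simp: abs_le_iff)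
  qed
  have cbrect: "cball_inf x r \<in> A_rect" if "0 \<le> r" for x r
    unfolding cball_inf_eq A_rect_def using that by (intro CollectI exI[of _ "\<chi> i. x$i - r"] exI[of _ "\<chi> i. x$i + r"]) auto
  have "measure \<mu> (ball_inf x0 r0) \<ge> \<upsilon> * r0 ^ d * f\<mu> x0"
  proof -
    have "x0 \<in> ball_inf x0 ((1 + \<upsilon>) * r0)" using r0p ups0 unfolding ball_inf_def
      by (simp add: linf_less_iff)
    then have "f\<mu> x0 \<le> (SUP x'\<in>ball_inf x0 ((1 + \<upsilon>) * r0). f\<mu> x')" by (rule supup)
    then have "\<upsilon> * r0 ^ d * f\<mu> x0 \<le> \<upsilon> * r0 ^ d * (SUP x'\<in>ball_inf x0 ((1 + \<upsilon>) * r0). f\<mu> x')"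
      using ups0 r0p by (intro mult_left_mono) auto
    then show ?thesis using KR[of x0 r0] x0 r0p by linarith
  qed
  moreover have "\<upsilon> * r0 ^ d * f\<mu> x0 > 0" using ups0 r0p x0 by simp
  moreover have "measure \<mu> (ball_inf x0 r0) \<le> measure \<mu> (cball_inf x0 r0)"
  proof -
    have bsub: "ball_inf x0 r0 \<subseteq> cball_inf x0 r0" by (auto simp: ball_inf_def cball_inf_def)
    have "cball_inf x0 r0 \<in> sets \<mu>" by (simp add: smu cball_inf_eq)
    then show ?thesis by (rule finite_measure.finite_measure_mono[OF fmu bsub])
  qed
  ultimately have cbpos: "measure \<mu> (cball_inf x0 r0) > 0" by linarith
  have "emeasure \<mu> (cball_inf x0 r0) \<le> M" using r0p by (intro Mupper cb0 cbrect) simp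
  define m where "m = enn2real M"
  have Mm: "M = ennreal m"
  proof -
    have "M < top" using Mle1 by (metis ennreal_one_less_top le_less_trans)
    then show ?thesis unfolding m_def by simp
  qed
  have m0: "0 \<le> m" unfolding m_def by simp
  have mpos: "0 < m" using \<open>emeasure \<mu> (cball_inf x0 r0) \<le> M\<close> cbpos unfolding Mm em
    using m0 by simp
  have bsubg: "ball_inf x r \<subseteq> cball_inf x r" for x r by (auto simp: ball_inf_def cball_inf_def)
  have step: "measure \<mu> A + \<upsilon> * (\<delta>/2) ^ d * (\<xi> / 2 ^ d) \<le> m"
    if A: "A \<in> A_rect" "A \<subseteq> superlevel (lower_density \<mu>) \<xi> \<inter> superlevel \<eta> (\<tau> + \<Delta>)"
      and D: "0 < \<Delta>" "\<Delta> \<le> C_S" and xi: "0 < \<xi>" and dl: "\<delta> = (\<Delta>/C_S) powr (1/\<beta>)"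
    for A \<xi> \<Delta> \<delta>
  proof -
    obtain a b where ab: "A = cbox a b" "\<forall>i. a$i \<le> b$i" using A(1) unfolding A_rect_def by blast
    have dpos: "0 < \<delta>" using D CS1 dl by simp
    have dle1: "\<delta> \<le> 1" unfolding dl using D CS1 beta0 by (intro powr_le1) auto
    have dpb: "\<delta> powr \<beta> = \<Delta> / C_S" unfolding dl using D CS1 beta0 by (simp add: powr_powr)
    define r where "r = \<delta> / 2"
    have r: "0 < r" "r < 1" "r \<le> \<delta>" using dpos dle1 unfolding r_def by auto
    define Ad where "Ad = cbox (\<chi> i. a$i - \<delta>) (\<chi> i. b$i + \<delta>)"
    have Adr: "Ad \<in> A_rect" unfolding Ad_def A_rect_def using ab dpos
      by (intro CollectI exI[of _ "\<chi> i. a$i - \<delta>"] exI[of _ "\<chi> i. b$i + \<delta>"]) (auto, smt (verit))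
    have Adsub: "Ad \<subseteq> superlevel \<eta> \<tau>"
    proof
      fix y assume y: "y \<in> Ad"
      define z where "z = (\<chi> i. max (a$i) (min (b$i) (y$i)))"
      have zA: "z \<in> A" unfolding ab z_def using ab(2) by (auto simp: mem_box_cart)
      have "\<bar>y$i - z$i\<bar> \<le> \<delta>" for i
      proof -
        have "a$i - \<delta> \<le> y$i" "y$i \<le> b$i + \<delta>" using y unfolding Ad_def by (auto simp: mem_box_cart)
        then show ?thesis using ab(2)[rule_format, of i] dpos unfolding z_def
          by (auto simp: abs_le_iff max_def min_def)
      qed
      then have "linf_dist y z \<le> \<delta>" by (simp add: linf_le_iff)
      then have "linf_dist y z powr \<beta> \<le> \<delta> powr \<beta>" using beta0 linf_nonneg by (intro powr_mono2) auto
      then have "C_S * linf_dist y z powr \<beta> \<le> \<Delta>" using dpb CS1 by (simp add: field_simps)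
      moreover have "\<eta> z \<ge> \<tau> + \<Delta>" using zA A(2) unfolding superlevel_def by auto
      ultimately show "y \<in> superlevel \<eta> \<tau>" using holx[of y z] unfolding superlevel_def
        by (auto simp: abs_le_iff)
    qed
    have mAd: "measure \<mu> Ad \<le> m"
    proof -
      have "emeasure \<mu> Ad \<le> M" by (rule Mupper[OF Adr Adsub])
      then show ?thesis unfolding em Mm using m0 by simp
    qed
    define c where "c = (\<chi> i. a$i - r)"
    define Bc where "Bc = ball_inf c r"
    have BcA: "Bc \<inter> A = {}"
    proof (rule ccontr)
      assume "Bc \<inter> A \<noteq> {}"
      then obtain y where y: "y \<in> Bc" "y \<in> A" by blast
      obtain i :: 'd where True by simp
      have "\<bar>c$i - y$i\<bar> < r" using y(1) unfolding Bc_def ball_inf_def by (simp add: linf_less_iff)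
      moreover have "a$i \<le> y$i" using y(2) unfolding ab by (simp add: mem_box_cart)
      ultimately show False unfolding c_def by (simp add: abs_less_iff)
    qed
    have BcAd: "Bc \<subseteq> Ad"
    proof
      fix y assume "y \<in> Bc"
      then have h: "\<bar>c$i - y$i\<bar> < r" for i unfolding Bc_def ball_inf_def by (simp add: linf_less_iff)
      have "a$i - \<delta> \<le> y$i \<and> y$i \<le> b$i + \<delta>" for i
      proof -
        have "\<bar>(a$i - r) - y$i\<bar> < r" using h[of i] unfolding c_def by simp
        then have "- r < (a$i - r) - y$i \<and> (a$i - r) - y$i < r" by linarith
        moreover have "\<delta> = 2 * r" unfolding r_def by simp
        ultimately show ?thesis using ab(2)[rule_format, of i] dpos by linarith
      qed
      then show "y \<in> Ad" unfolding Ad_def by (simp add: mem_box_cart)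
    qed
    have AAd: "A \<subseteq> Ad"
    proof
      fix y assume "y \<in> A"
      then have h: "a$i \<le> y$i \<and> y$i \<le> b$i" for i unfolding ab by (simp add: mem_box_cart)
      have "a$i - \<delta> \<le> y$i \<and> y$i \<le> b$i + \<delta>" for i using h[of i] dpos by simp
      then show "y \<in> Ad" unfolding Ad_def by (simp add: mem_box_cart)
    qed
    have setsA: "A \<in> sets \<mu>" "Bc \<in> sets \<mu>" "Ad \<in> sets \<mu>"
      unfolding smu ab(1) Bc_def Ad_def ball_inf_eq by simp_all
    have "measure \<mu> A + measure \<mu> Bc = measure \<mu> (A \<union> Bc)"
    proof -
      have "A \<inter> Bc = {}" using BcA by blast
      then show ?thesis using finite_measure.finite_measure_Union[OF fmu setsA(1,2)] by simp
    qed
    also have "\<dots> \<le> measure \<mu> Ad"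
    proof -
      have "A \<union> Bc \<subseteq> Ad" using BcAd AAd by blast
      then show ?thesis by (rule finite_measure.finite_measure_mono[OF fmu _ setsA(3)])
    qed
    finally have sumle: "measure \<mu> A + measure \<mu> Bc \<le> m" using mAd by linarith
    have cAd: "c \<in> Ad"
    proof -
      have "a$i - \<delta> \<le> c$i \<and> c$i \<le> b$i + \<delta>" for i
        using ab(2)[rule_format, of i] r dpos unfolding c_def by simp
      then show ?thesis unfolding Ad_def by (simp add: mem_box_cart)
    qed
    have etac: "\<tau> \<le> \<eta> c" using Adsub cAd unfolding superlevel_def by auto
    define S where "S = (SUP x'\<in>ball_inf c ((1 + \<upsilon>) * r). f\<mu> x')"
    have KRc: "measure \<mu> Bc \<ge> \<upsilon> * r ^ d * S" unfolding Bc_def S_def by (rule KR[OF etac r(1,2)])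
    define \<rho> where "\<rho> = \<upsilon> * r / 2"
    have "\<upsilon> * r < 1 * 1" using mult_strict_mono[of \<upsilon> 1 r 1] ups0 ups1 r by simp
    then have rho: "0 < \<rho>" "\<rho> < 1" using ups0 ups1 r unfolding \<rho>_def by auto
    have cbsub: "cball_inf a \<rho> \<subseteq> ball_inf c ((1 + \<upsilon>) * r)"
    proof
      fix y assume "y \<in> cball_inf a \<rho>"
      then have "\<bar>a$i - y$i\<bar> \<le> \<rho>" for i unfolding cball_inf_def by (simp add: linf_le_iff)
      then have "\<bar>c$i - y$i\<bar> < (1 + \<upsilon>) * r" for i
      proof -
        have h: "\<bar>a$i - y$i\<bar> \<le> \<upsilon> * r / 2" using \<open>\<bar>a$i - y$i\<bar> \<le> \<rho>\<close> unfolding \<rho>_def .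
        have "\<upsilon> * r / 2 < \<upsilon> * r" using r ups0 by simp
        moreover have "a$i - y$i \<le> \<upsilon> * r / 2" "- (a$i - y$i) \<le> \<upsilon> * r / 2"
          using abs_le_D1[OF h] abs_le_D2[OF h] by auto
        moreover have "c$i = a$i - r" unfolding c_def by simp
        moreover have "0 < \<upsilon> * r" using ups0 r by simp
        moreover note r(1)
        ultimately have "c$i - y$i < (1 + \<upsilon>) * r" "- (c$i - y$i) < (1 + \<upsilon>) * r"
          by (simp_all add: algebra_simps)
        then show ?thesis by (simp only: abs_less_iff)
      qed
      then show "y \<in> ball_inf c ((1 + \<upsilon>) * r)" unfolding ball_inf_def by (simp add: linf_less_iff)
    qed
    have fS: "\<forall>y\<in>cball_inf a \<rho>. f\<mu> y \<le> S" unfolding S_def using cbsub supup by blast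
    have acb: "a \<in> cball_inf a \<rho>" unfolding cball_inf_def using rho by (simp add: linf_le_iff)
    have S0: "0 \<le> S" using fS acb fnn by (meson order_trans)
    have mcb: "measure \<mu> (cball_inf a \<rho>) \<le> S * (2*\<rho>) ^ CARD('d)"
      by (rule dens_bound[OF cont fnn mu2 fmu fS S0]) (use rho in simp)
    have aA: "a \<in> A" unfolding ab using ab(2) by (simp add: mem_box_cart)
    have "\<xi> \<le> lower_density \<mu> a" using A(2) aA unfolding superlevel_def by auto
    also have "lower_density \<mu> a \<le> measure \<mu> (cball_inf a \<rho>) / \<rho> ^ CARD('d)"
      unfolding lower_density_def
      by (rule cINF_lower) (auto intro!: bdd_belowI[of _ 0] simp: rho)
    finally have "\<xi> * \<rho> ^ CARD('d) \<le> measure \<mu> (cball_inf a \<rho>)" using rho by (simp add: field_simps)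
    also note mcb
    finally have "\<xi> * \<rho> ^ CARD('d) \<le> S * 2 ^ CARD('d) * \<rho> ^ CARD('d)" by (simp add: power_mult_distrib mult.assoc)
    then have "\<xi> \<le> S * 2 ^ CARD('d)" using rho by simp
    then have xiS: "\<xi> / 2 ^ d \<le> S" unfolding d_def by (simp add: field_simps)
    have "\<upsilon> * (\<delta>/2) ^ d * (\<xi> / 2 ^ d) \<le> \<upsilon> * r ^ d * S"
      unfolding r_def using ups0 dpos by (intro mult_left_mono xiS) auto
    then show ?thesis using KRc sumle by linarith
  qed
  have appx: "M - ennreal (C_App * (\<xi> powr \<kappa> + \<Delta> powr \<gamma>))
      \<le> rect_sup \<mu> (superlevel (lower_density \<mu>) \<xi> \<inter> superlevel \<eta> (\<tau> + \<Delta>))"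
    if "0 < \<xi>" "0 < \<Delta>" for \<xi> \<Delta>
    using app that unfolding App_class_def M_def \<mu>_def by blast
  have bound: "\<upsilon> * (\<delta>/2) ^ d * (\<xi> / 2 ^ d) \<le> C_App * (\<xi> powr \<kappa> + \<Delta> powr \<gamma>)"
    if D: "0 < \<Delta>" "\<Delta> \<le> C_S" and xi: "0 < \<xi>" and lt: "C_App * (\<xi> powr \<kappa> + \<Delta> powr \<gamma>) < m"
      and dl: "\<delta> = (\<Delta>/C_S) powr (1/\<beta>)" for \<xi> \<Delta> \<delta>
  proof -
    define e where "e = \<upsilon> * (\<delta>/2) ^ d * (\<xi> / 2 ^ d)"
    define x where "x = C_App * (\<xi> powr \<kappa> + \<Delta> powr \<gamma>)"
    have x0: "0 \<le> x" unfolding x_def using CA1 by simp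
    have "rect_sup \<mu> (superlevel (lower_density \<mu>) \<xi> \<inter> superlevel \<eta> (\<tau> + \<Delta>)) \<le> ennreal (m - e)"
      unfolding rect_sup_def
    proof (rule Sup_least)
      fix y assume "y \<in> {emeasure \<mu> A |A. A \<in> A_rect \<and> A \<subseteq> superlevel (lower_density \<mu>) \<xi> \<inter> superlevel \<eta> (\<tau> + \<Delta>)}"
      then obtain A where A: "y = emeasure \<mu> A" "A \<in> A_rect" "A \<subseteq> superlevel (lower_density \<mu>) \<xi> \<inter> superlevel \<eta> (\<tau> + \<Delta>)" by blast
      have "measure \<mu> A \<le> m - e" using step[OF A(2,3) D xi dl] unfolding e_def by linarith
      then show "y \<le> ennreal (m - e)" unfolding A(1) em by (rule ennreal_leI)
    qed
    moreover have "M - ennreal x = ennreal (m - x)" unfolding Mm using x0 by (simp add: ennreal_minus)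
    ultimately have le: "ennreal (m - x) \<le> ennreal (m - e)" using appx[OF xi D(1)] unfolding x_def by simp
    have mx: "0 < m - x" using lt unfolding x_def by simp
    show ?thesis
    proof (cases "0 \<le> m - e")
      case True
      then show ?thesis using le unfolding e_def x_def by simp
    next
      case False
      then have "ennreal (m - e) = 0" by (simp add: ennreal_neg)
      then show ?thesis using le mx by simp
    qed
  qed
  show ?thesis
  proof (rule ccontr)
    assume "\<not> ?thesis"
    then have big: "real d * \<kappa> < \<beta> * \<gamma> * (\<kappa> - 1)" unfolding d_def by simp
    define p where "p = \<gamma> - \<gamma>/\<kappa> - real d/\<beta>"
    have ppos: "0 < p"
    proof -
      have "real d * \<kappa> / (\<beta> * \<kappa>) < \<beta> * \<gamma> * (\<kappa> - 1) / (\<beta> * \<kappa>)"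
        using big beta0 kap0 by (intro divide_strict_right_mono) auto
      then show ?thesis unfolding p_def using beta0 kap0 by (simp add: field_simps)
    qed
    define K where "K = \<upsilon> / (4 ^ d * C_S powr (real d/\<beta>))"
    have Kpos: "0 < K" unfolding K_def using ups0 CS1 by simp
    define \<Delta> where "\<Delta> = min C_S (min ((K/(4*C_App)) powr (1/p)) ((m/(4*C_App)) powr (1/\<gamma>)))"
    have Dpos: "0 < \<Delta>" unfolding \<Delta>_def using CS1 Kpos CA1 mpos by simp
    have DCS: "\<Delta> \<le> C_S" unfolding \<Delta>_def by simp
    have Dp: "\<Delta> powr p \<le> K/(4*C_App)"
    proof -
      have "\<Delta> powr p \<le> ((K/(4*C_App)) powr (1/p)) powr p"
        using Dpos ppos unfolding \<Delta>_def by (intro powr_mono2) auto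
      also have "\<dots> = K/(4*C_App)" using ppos Kpos CA1 by (simp add: powr_powr)
      finally show ?thesis .
    qed
    have Dg: "\<Delta> powr \<gamma> \<le> m/(4*C_App)"
    proof -
      have "\<Delta> powr \<gamma> \<le> ((m/(4*C_App)) powr (1/\<gamma>)) powr \<gamma>"
        using Dpos gam0 unfolding \<Delta>_def by (intro powr_mono2) auto
      also have "\<dots> = m/(4*C_App)" using gam0 mpos CA1 by (simp add: powr_powr)
      finally show ?thesis .
    qed
    define \<xi> where "\<xi> = \<Delta> powr (\<gamma>/\<kappa>)"
    define \<delta> where "\<delta> = (\<Delta>/C_S) powr (1/\<beta>)"
    have xipos: "0 < \<xi>" unfolding \<xi>_def using Dpos by simp
    have xik: "\<xi> powr \<kappa> = \<Delta> powr \<gamma>" unfolding \<xi>_def using kap0 Dpos by (simp add: powr_powr)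
    have lt: "C_App * (\<xi> powr \<kappa> + \<Delta> powr \<gamma>) < m"
    proof -
      have "C_App * (\<xi> powr \<kappa> + \<Delta> powr \<gamma>) = 2 * C_App * \<Delta> powr \<gamma>" unfolding xik by simp
      also have "\<dots> \<le> 2 * C_App * (m/(4*C_App))" using Dg CA1 by (intro mult_left_mono) auto
      also have "\<dots> = m / 2" using CA1 by (simp add: field_simps)
      finally show ?thesis using mpos by linarith
    qed
    have B: "\<upsilon> * (\<delta>/2) ^ d * (\<xi> / 2 ^ d) \<le> C_App * (\<xi> powr \<kappa> + \<Delta> powr \<gamma>)"
      by (rule bound[OF Dpos DCS xipos lt \<delta>_def])
    define Q where "Q = \<Delta> powr (real d/\<beta> + \<gamma>/\<kappa>)"
    have Qpos: "0 < Q" unfolding Q_def using Dpos by simp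
    have dpos: "0 < \<delta>" unfolding \<delta>_def using Dpos CS1 by simp
    have "\<delta> ^ d = \<delta> powr (real d)" using dpos by (simp add: powr_realpow)
    also have "\<dots> = (\<Delta>/C_S) powr (real d/\<beta>)" unfolding \<delta>_def using Dpos CS1 by (simp add: powr_powr)
    also have "\<dots> = \<Delta> powr (real d/\<beta>) / C_S powr (real d/\<beta>)" using Dpos CS1 by (simp add: powr_divide)
    finally have dd: "\<delta> ^ d = \<Delta> powr (real d/\<beta>) / C_S powr (real d/\<beta>)" .
    have e1: "\<upsilon> * (\<delta>/2) ^ d * (\<xi> / 2 ^ d) = K * Q"
      unfolding K_def Q_def \<xi>_def using CS1 Dpos
      by (simp add: power_divide dd powr_add field_simps power_mult_distrib[symmetric])
    have e2: "C_App * (\<xi> powr \<kappa> + \<Delta> powr \<gamma>) = 2 * C_App * Q * \<Delta> powr p"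
      unfolding xik Q_def p_def using Dpos by (simp add: powr_add[symmetric])
    have "K * Q \<le> 2 * C_App * Q * \<Delta> powr p" using B unfolding e1 e2 .
    then have "K \<le> 2 * C_App * \<Delta> powr p" using Qpos by (simp add: field_simps)
    also have "\<dots> \<le> 2 * C_App * (K/(4*C_App))" using Dp CA1 by (intro mult_left_mono) auto
    also have "\<dots> = K / 2" using CA1 by (simp add: field_simps)
    finally show False using Kpos by linarith
  qed
qed

end
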